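(* Let $G$ be a group and let $H$ be a subgroup of $G$ that is closed in the profinite topology of $G$. Then $\mu(H)=\frac{1}{[G:H]}$ (interpreted as $0$ when $[G:H]=\infty$).
   Context: The profinite topology on a group $G$ has as a basis the cosets of finite index subgroups of $G$; equivalently a subgroup is closed iff it is an intersection of finite index subgroups. The profinite measure of a subset $S\subseteq G$ is $\mu(S)=\inf_{\varphi}\frac{|\varphi(S)|}{|\varphi(G)|}$, where $\varphi$ ranges over all epimorphisms from $G$ onto finite groups. *)

theory Defs
  imports "HOL-Algebra.Algebra" Complex_Main
begin

definition finite_index_subgroup :: "('a, 'b) monoid_scheme \<Rightarrow> 'a set \<Rightarrow> bool" where
  "finite_index_subgroup G K \<longleftrightarrow> subgroup K G \<and> finite (rcosets\<^bsub>G\<^esub> K)"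

definition profinite_open :: "('a, 'b) monoid_scheme \<Rightarrow> 'a set \<Rightarrow> bool" where
  "profinite_open G U \<longleftrightarrow> U \<subseteq> carrier G \<and>
     (\<forall>x\<in>U. \<exists>K. finite_index_subgroup G K \<and> x <#\<^bsub>G\<^esub> K \<subseteq> U)"

definition profinite_closed :: "('a, 'b) monoid_scheme \<Rightarrow> 'a set \<Rightarrow> bool" where
  "profinite_closed G S \<longleftrightarrow> S \<subseteq> carrier G \<and> profinite_open G (carrier G - S)"

text \<open>Profinite measure: infimum over all epimorphisms onto finite groups.
  Every finite group is isomorphic to one with carrier in nat, so target groups
  are taken with carrier type nat.\<close>
definition profinite_measure :: "('a, 'b) monoid_scheme \<Rightarrow> 'a set \<Rightarrow> real" where
  "profinite_measure G S = Inf {real (card (\<phi> ` S)) / real (card (\<phi> ` carrier G)) | \<phi> (F :: nat monoid).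
      group F \<and> finite (carrier F) \<and> \<phi> \<in> epi G F}"

end

theory Submission
  imports Defs
begin

lemma transport:
  fixes G :: "('a,'b) monoid_scheme" and f :: "'a \<Rightarrow> nat"
  assumes G: "group G" and fin: "finite (f ` carrier G)"
  and cong: "\<And>x y x' y'. x\<in>carrier G \<Longrightarrow> y \<in> carrier G \<Longrightarrow> x'\<in>carrier G \<Longrightarrow> y'\<in>carrier G
     \<Longrightarrow> f x = f x' \<Longrightarrow> f y = f y' \<Longrightarrow> f (x \<otimes>\<^bsub>G\<^esub> y) = f (x' \<otimes>\<^bsub>G\<^esub> y')"
  shows "\<exists>F::nat monoid. group F \<and> finite (carrier F) \<and> f \<in> epi G F"
proof -
  interpret G: group G by (rule G)
  define rep where "rep a = (SOME x. x \<in> carrier G \<and> f x = a)" for a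
  have rep: "rep (f x) \<in> carrier G \<and> f (rep (f x)) = f x" if "x \<in> carrier G" for x
    unfolding rep_def by (rule someI[of _ x]) (use that in auto)
  define F where "F = \<lparr>carrier = f ` carrier G, monoid.mult = (\<lambda>a b. f (rep a \<otimes>\<^bsub>G\<^esub> rep b)), one = f \<one>\<^bsub>G\<^esub>\<rparr>"
  have cF: "carrier F = f ` carrier G" and oF: "\<one>\<^bsub>F\<^esub> = f \<one>\<^bsub>G\<^esub>" by (simp_all add: F_def)
  have key: "f x \<otimes>\<^bsub>F\<^esub> f y = f (x \<otimes>\<^bsub>G\<^esub> y)" if "x \<in> carrier G" "y \<in> carrier G" for x y
  proof -
    have "f x \<otimes>\<^bsub>F\<^esub> f y = f (rep (f x) \<otimes>\<^bsub>G\<^esub> rep (f y))" by (simp add: F_def)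
    also have "\<dots> = f (x \<otimes>\<^bsub>G\<^esub> y)"
      using rep[OF that(1)] rep[OF that(2)] that by (intro cong) auto
    finally show ?thesis .
  qed
  have gF: "group F"
  proof (rule groupI)
    fix x y assume "x \<in> carrier F" "y \<in> carrier F"
    then show "x \<otimes>\<^bsub>F\<^esub> y \<in> carrier F" by (auto simp: cF key)
  next
    show "\<one>\<^bsub>F\<^esub> \<in> carrier F" by (simp add: cF oF)
  next
    fix x y z assume "x \<in> carrier F" "y \<in> carrier F" "z \<in> carrier F"
    then show "x \<otimes>\<^bsub>F\<^esub> y \<otimes>\<^bsub>F\<^esub> z = x \<otimes>\<^bsub>F\<^esub> (y \<otimes>\<^bsub>F\<^esub> z)"
      by (auto simp: cF key G.m_assoc)
  next
    fix x assume "x \<in> carrier F"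
    then show "\<one>\<^bsub>F\<^esub> \<otimes>\<^bsub>F\<^esub> x = x" by (auto simp: cF oF key)
  next
    fix x assume "x \<in> carrier F"
    then obtain a where a: "a \<in> carrier G" "x = f a" by (auto simp: cF)
    then have "f (inv\<^bsub>G\<^esub> a) \<in> carrier F" "f (inv\<^bsub>G\<^esub> a) \<otimes>\<^bsub>F\<^esub> x = \<one>\<^bsub>F\<^esub>"
      by (auto simp: cF key oF)
    then show "\<exists>y\<in>carrier F. y \<otimes>\<^bsub>F\<^esub> x = \<one>\<^bsub>F\<^esub>" by blast
  qed
  have "f \<in> epi G F"
    unfolding epi_def hom_def by (auto simp: cF key)
  with gF fin show ?thesis by (auto simp: cF)
qed

lemma action_epi:
  fixes G :: "('a,'b) monoid_scheme"
  assumes G: "group G" and K: "subgroup K G" and fin: "finite (rcosets\<^bsub>G\<^esub> K)"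
  shows "\<exists>(F::nat monoid) \<psi>. group F \<and> finite (carrier F) \<and> \<psi> \<in> epi G F \<and>
     (\<forall>x\<in>carrier G. \<forall>y\<in>carrier G. \<psi> x = \<psi> y \<longrightarrow> x \<otimes>\<^bsub>G\<^esub> inv\<^bsub>G\<^esub> y \<in> K)"
proof -
  interpret G: group G by (rule G)
  interpret K: subgroup K G by (rule K)
  define \<phi> where "\<phi> x = restrict (\<lambda>C. C #>\<^bsub>G\<^esub> x) (rcosets\<^bsub>G\<^esub> K)" for x
  have rc: "C #>\<^bsub>G\<^esub> x \<in> rcosets\<^bsub>G\<^esub> K" if "C \<in> rcosets\<^bsub>G\<^esub> K" "x \<in> carrier G" for C x
  proof -
    from that obtain a where a: "a \<in> carrier G" "C = K #>\<^bsub>G\<^esub> a" by (auto simp: RCOSETS_def)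
    then have "C #>\<^bsub>G\<^esub> x = K #>\<^bsub>G\<^esub> (a \<otimes>\<^bsub>G\<^esub> x)" by (simp add: G.coset_mult_assoc that(2) K.subset)
    then show ?thesis using a that(2) by (simp add: G.rcosetsI K.subset)
  qed
  have finX: "finite (\<phi> ` carrier G)"
  proof (rule finite_subset)
    show "\<phi> ` carrier G \<subseteq> PiE (rcosets\<^bsub>G\<^esub> K) (\<lambda>_. rcosets\<^bsub>G\<^esub> K)"
    proof (rule image_subsetI)
      fix x assume "x \<in> carrier G"
      then show "\<phi> x \<in> PiE (rcosets\<^bsub>G\<^esub> K) (\<lambda>_. rcosets\<^bsub>G\<^esub> K)"
        unfolding \<phi>_def restrict_PiE_iff using rc by blast
    qed
    show "finite (PiE (rcosets\<^bsub>G\<^esub> K) (\<lambda>_. rcosets\<^bsub>G\<^esub> K))" using fin by (intro finite_PiE)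
  qed
  obtain e where e: "bij_betw e (\<phi> ` carrier G) {0..<card (\<phi> ` carrier G)}"
    using ex_bij_betw_finite_nat[OF finX] by blast
  have einj: "inj_on e (\<phi> ` carrier G)" using e by (simp add: bij_betw_def)
  define \<psi> where "\<psi> x = e (\<phi> x)" for x
  have eq: "\<psi> x = \<psi> y \<longleftrightarrow> \<phi> x = \<phi> y" if "x \<in> carrier G" "y \<in> carrier G" for x y
    using einj that unfolding \<psi>_def by (auto dest: inj_onD)
  have phicong: "\<phi> (x \<otimes>\<^bsub>G\<^esub> y) = \<phi> (x' \<otimes>\<^bsub>G\<^esub> y')"
    if xy: "x\<in>carrier G" "y \<in> carrier G" "x'\<in>carrier G" "y'\<in>carrier G" "\<phi> x = \<phi> x'" "\<phi> y = \<phi> y'" for x y x' y'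
  proof
    fix C show "\<phi> (x \<otimes>\<^bsub>G\<^esub> y) C = \<phi> (x' \<otimes>\<^bsub>G\<^esub> y') C"
    proof (cases "C \<in> rcosets\<^bsub>G\<^esub> K")
      case True
      have sub: "C \<subseteq> carrier G" using True K.rcosets_carrier[OF G] by blast
      have "\<phi> (x \<otimes>\<^bsub>G\<^esub> y) C = C #>\<^bsub>G\<^esub> (x \<otimes>\<^bsub>G\<^esub> y)" using True by (simp add: \<phi>_def)
      also have "\<dots> = (C #>\<^bsub>G\<^esub> x) #>\<^bsub>G\<^esub> y" using sub xy(1,2) by (simp add: G.coset_mult_assoc)
      also have "\<dots> = \<phi> y (\<phi> x C)" using True rc[OF True xy(1)] by (simp add: \<phi>_def)
      also have "\<dots> = \<phi> y' (\<phi> x' C)" using xy(5,6) by simp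
      also have "\<dots> = (C #>\<^bsub>G\<^esub> x') #>\<^bsub>G\<^esub> y'" using True rc[OF True xy(3)] by (simp add: \<phi>_def)
      also have "\<dots> = C #>\<^bsub>G\<^esub> (x' \<otimes>\<^bsub>G\<^esub> y')" using sub xy(3,4) by (simp add: G.coset_mult_assoc)
      also have "\<dots> = \<phi> (x' \<otimes>\<^bsub>G\<^esub> y') C" using True by (simp add: \<phi>_def)
      finally show ?thesis .
    qed (simp add: \<phi>_def)
  qed
  have "\<exists>F::nat monoid. group F \<and> finite (carrier F) \<and> \<psi> \<in> epi G F"
  proof (rule transport[OF G])
    have "\<psi> ` carrier G = e ` (\<phi> ` carrier G)" by (auto simp: \<psi>_def)
    then show "finite (\<psi> ` carrier G)" using finX by simp
  next
    fix x y x' y' assume "x\<in>carrier G" "y \<in> carrier G" "x'\<in>carrier G" "y'\<in>carrier G" "\<psi> x = \<psi> x'" "\<psi> y = \<psi> y'"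
    then have "\<phi> x = \<phi> x'" "\<phi> y = \<phi> y'" using eq by blast+
    then have "\<phi> (x \<otimes>\<^bsub>G\<^esub> y) = \<phi> (x' \<otimes>\<^bsub>G\<^esub> y')"
      using phicong \<open>x\<in>carrier G\<close> \<open>y\<in>carrier G\<close> \<open>x'\<in>carrier G\<close> \<open>y'\<in>carrier G\<close> by blast
    then show "\<psi> (x \<otimes>\<^bsub>G\<^esub> y) = \<psi> (x' \<otimes>\<^bsub>G\<^esub> y')"
      unfolding \<psi>_def by simp
  qed
  then obtain F :: "nat monoid" where F: "group F \<and> finite (carrier F) \<and> \<psi> \<in> epi G F" by blast
  have ker: "x \<otimes>\<^bsub>G\<^esub> inv\<^bsub>G\<^esub> y \<in> K" if "x \<in> carrier G" "y \<in> carrier G" "\<psi> x = \<psi> y" for x y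
  proof -
    have "\<phi> x = \<phi> y" using eq that by simp
    moreover have KK: "K \<in> rcosets\<^bsub>G\<^esub> K"
      using G.rcosetsI[OF K.subset G.one_closed] K.subset by simp
    ultimately have "K #>\<^bsub>G\<^esub> x = K #>\<^bsub>G\<^esub> y"
      unfolding \<phi>_def using restrict_apply'[of K "rcosets\<^bsub>G\<^esub> K"] by metis
    then have "x \<in> K #>\<^bsub>G\<^esub> y" using G.rcos_self[OF that(1) K] by simp
    then show ?thesis using K.rcos_module_imp[OF G that(2)] by blast
  qed
  show ?thesis using F ker by blast
qed


lemma coset_char:
  assumes G: "group G" and K: "subgroup K G" and x: "x \<in> carrier G"
  shows "K #>\<^bsub>G\<^esub> x = {y \<in> carrier G. y \<otimes>\<^bsub>G\<^esub> inv\<^bsub>G\<^esub> x \<in> K}"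
proof -
  interpret G: group G by (rule G)
  interpret K: subgroup K G by (rule K)
  have "K #>\<^bsub>G\<^esub> x \<subseteq> carrier G" using G.r_coset_subset_G[OF K.subset x] .
  then show ?thesis using K.rcos_module[OF G x] by blast
qed

lemma epi_rcosets:
  fixes G :: "('a,'b) monoid_scheme" and F :: "('c,'d) monoid_scheme"
  assumes G: "group G" and F: "group F" and psi: "\<psi> \<in> epi G F" and H: "subgroup H G"
  shows "rcosets\<^bsub>F\<^esub> (\<psi> ` H) = (\<lambda>C. \<psi> ` C) ` (rcosets\<^bsub>G\<^esub> H)"
proof -
  interpret G: group G by (rule G)
  interpret F: group F by (rule F)
  interpret H: subgroup H G by (rule H)
  have hom: "\<psi> \<in> hom G F" and surj: "\<psi> ` carrier G = carrier F" using psi by (auto simp: epi_def)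
  have img: "\<psi> ` (H #>\<^bsub>G\<^esub> x) = \<psi> ` H #>\<^bsub>F\<^esub> \<psi> x" if x: "x \<in> carrier G" for x
  proof -
    have "\<psi> ` (H #>\<^bsub>G\<^esub> x) = (\<lambda>h. \<psi> (h \<otimes>\<^bsub>G\<^esub> x)) ` H" unfolding r_coset_def by auto
    also have "\<dots> = (\<lambda>h. \<psi> h \<otimes>\<^bsub>F\<^esub> \<psi> x) ` H"
      using hom_mult[OF hom _ x] H.subset by (intro image_cong) auto
    also have "\<dots> = \<psi> ` H #>\<^bsub>F\<^esub> \<psi> x" unfolding r_coset_def by auto
    finally show ?thesis .
  qed
  have "rcosets\<^bsub>F\<^esub> (\<psi> ` H) = (\<lambda>x. \<psi> ` H #>\<^bsub>F\<^esub> \<psi> x) ` carrier G"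
    unfolding RCOSETS_def surj[symmetric] by auto
  also have "\<dots> = (\<lambda>x. \<psi> ` (H #>\<^bsub>G\<^esub> x)) ` carrier G" using img by auto
  also have "\<dots> = (\<lambda>C. \<psi> ` C) ` (rcosets\<^bsub>G\<^esub> H)" unfolding RCOSETS_def by auto
  finally show ?thesis .
qed

lemma epi_rcosets_inj:
  fixes G :: "('a,'b) monoid_scheme" and F :: "('c,'d) monoid_scheme"
  assumes G: "group G" and F: "group F" and psi: "\<psi> \<in> epi G F" and H: "subgroup H G"
    and ker: "\<forall>x\<in>carrier G. \<forall>y\<in>carrier G. \<psi> x = \<psi> y \<longrightarrow> x \<otimes>\<^bsub>G\<^esub> inv\<^bsub>G\<^esub> y \<in> H"
  shows "inj_on (\<lambda>C. \<psi> ` C) (rcosets\<^bsub>G\<^esub> H)"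
proof (rule inj_onI)
  interpret G: group G by (rule G)
  interpret H: subgroup H G by (rule H)
  fix C D assume C: "C \<in> rcosets\<^bsub>G\<^esub> H" and D: "D \<in> rcosets\<^bsub>G\<^esub> H" and eq: "\<psi> ` C = \<psi> ` D"
  obtain x where x: "x \<in> carrier G" "C = H #>\<^bsub>G\<^esub> x" using C by (auto simp: RCOSETS_def)
  obtain y where y: "y \<in> carrier G" "D = H #>\<^bsub>G\<^esub> y" using D by (auto simp: RCOSETS_def)
  have "x \<in> C" using x G.rcos_self[OF x(1) H] by simp
  then have "\<psi> x \<in> \<psi> ` D" using eq by blast
  then obtain z where z: "z \<in> D" "\<psi> x = \<psi> z" by blast
  have zc: "z \<in> carrier G" using z(1) y G.r_coset_subset_G[OF H.subset y(1)] by blast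
  have "x \<otimes>\<^bsub>G\<^esub> inv\<^bsub>G\<^esub> z \<in> H" using ker x(1) zc z(2) by blast
  then have "x \<in> H #>\<^bsub>G\<^esub> z" using H.rcos_module_rev[OF G zc x(1)] by blast
  then have "H #>\<^bsub>G\<^esub> z = H #>\<^bsub>G\<^esub> x" using G.repr_independence[OF _ zc H] by blast
  moreover have "H #>\<^bsub>G\<^esub> y = H #>\<^bsub>G\<^esub> z" using G.repr_independence[OF _ y(1) H] z(1) y(2) by blast
  ultimately show "C = D" using x y by simp
qed

lemma epi_ratio:
  fixes G :: "('a,'b) monoid_scheme" and F :: "('c,'d) monoid_scheme"
  assumes G: "group G" and F: "group F" and fin: "finite (carrier F)" and psi: "\<psi> \<in> epi G F"
    and H: "subgroup H G"
  shows "real (card (\<psi> ` H)) / real (card (\<psi> ` carrier G)) = 1 / real (card (rcosets\<^bsub>F\<^esub> (\<psi> ` H)))"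
    and "subgroup (\<psi> ` H) F"
proof -
  interpret G: group G by (rule G)
  interpret F: group F by (rule F)
  have hom: "\<psi> \<in> hom G F" and surj: "\<psi> ` carrier G = carrier F" using psi by (auto simp: epi_def)
  have gh: "group_hom G F \<psi>" unfolding group_hom_def group_hom_axioms_def using G F hom by simp
  show sg: "subgroup (\<psi> ` H) F" using group_hom.subgroup_img_is_subgroup[OF gh H] .
  have lag: "card (rcosets\<^bsub>F\<^esub> (\<psi> ` H)) * card (\<psi> ` H) = card (carrier F)"
    using F.lagrange[OF sg] by (simp add: order_def)
  have "carrier F \<noteq> {}" using F.one_closed by blast
  then have pos: "card (carrier F) > 0" using fin by (simp add: card_gt_0_iff)
  then have "card (rcosets\<^bsub>F\<^esub> (\<psi> ` H)) > 0" "card (\<psi> ` H) > 0" using lag by (auto intro!: Nat.gr0I)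
  then show "real (card (\<psi> ` H)) / real (card (\<psi> ` carrier G)) = 1 / real (card (rcosets\<^bsub>F\<^esub> (\<psi> ` H)))"
    using lag surj pos by (simp add: field_simps flip: of_nat_mult)
qed


lemma fi_Int:
  assumes G: "group G" and A: "finite_index_subgroup G A" and B: "finite_index_subgroup G B"
  shows "finite_index_subgroup G (A \<inter> B)"
proof -
  interpret G: group G by (rule G)
  have sA: "subgroup A G" and fA: "finite (rcosets\<^bsub>G\<^esub> A)" using A by (auto simp: finite_index_subgroup_def)
  have sB: "subgroup B G" and fB: "finite (rcosets\<^bsub>G\<^esub> B)" using B by (auto simp: finite_index_subgroup_def)
  have sAB: "subgroup (A \<inter> B) G" using G.subgroups_Inter_pair[OF sA sB] .
  have "rcosets\<^bsub>G\<^esub> (A \<inter> B) \<subseteq> (\<lambda>(P,Q). P \<inter> Q) ` ((rcosets\<^bsub>G\<^esub> A) \<times> (rcosets\<^bsub>G\<^esub> B))"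
  proof
    fix C assume "C \<in> rcosets\<^bsub>G\<^esub> (A \<inter> B)"
    then obtain x where x: "x \<in> carrier G" "C = (A \<inter> B) #>\<^bsub>G\<^esub> x" by (auto simp: RCOSETS_def)
    have "C = (A #>\<^bsub>G\<^esub> x) \<inter> (B #>\<^bsub>G\<^esub> x)"
      using x coset_char[OF G sAB x(1)] coset_char[OF G sA x(1)] coset_char[OF G sB x(1)] by auto
    moreover have "A #>\<^bsub>G\<^esub> x \<in> rcosets\<^bsub>G\<^esub> A" "B #>\<^bsub>G\<^esub> x \<in> rcosets\<^bsub>G\<^esub> B"
      using x(1) by (auto simp: RCOSETS_def)
    ultimately show "C \<in> (\<lambda>(P,Q). P \<inter> Q) ` ((rcosets\<^bsub>G\<^esub> A) \<times> (rcosets\<^bsub>G\<^esub> B))" by force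
  qed
  then have "finite (rcosets\<^bsub>G\<^esub> (A \<inter> B))" using fA fB by (meson finite_SigmaI finite_imageI finite_subset)
  then show ?thesis using sAB by (simp add: finite_index_subgroup_def)
qed

lemma rcosets_card_eq:
  fixes G :: "('a,'b) monoid_scheme" and F :: "('c,'d) monoid_scheme"
  assumes G: "group G" and F: "group F" and fin: "finite (carrier F)" and psi: "\<psi> \<in> epi G F"
    and H: "subgroup H G"
    and ker: "\<forall>x\<in>carrier G. \<forall>y\<in>carrier G. \<psi> x = \<psi> y \<longrightarrow> x \<otimes>\<^bsub>G\<^esub> inv\<^bsub>G\<^esub> y \<in> H"
  shows "card (rcosets\<^bsub>F\<^esub> (\<psi> ` H)) = card (rcosets\<^bsub>G\<^esub> H)" and "finite (rcosets\<^bsub>G\<^esub> H)"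
proof -
  interpret F: group F by (rule F)
  have inj: "inj_on (\<lambda>C. \<psi> ` C) (rcosets\<^bsub>G\<^esub> H)" by (rule epi_rcosets_inj[OF G F psi H ker])
  have eq: "rcosets\<^bsub>F\<^esub> (\<psi> ` H) = (\<lambda>C. \<psi> ` C) ` (rcosets\<^bsub>G\<^esub> H)" by (rule epi_rcosets[OF G F psi H])
  show "card (rcosets\<^bsub>F\<^esub> (\<psi> ` H)) = card (rcosets\<^bsub>G\<^esub> H)" using card_image[OF inj] eq by simp
  have "finite (rcosets\<^bsub>F\<^esub> (\<psi> ` H))"
    using F.rcosets_subset_PowG[OF epi_ratio(2)[OF G F fin psi H]] fin
    by (meson finite_Pow_iff finite_subset)
  then show "finite (rcosets\<^bsub>G\<^esub> H)" using eq inj finite_imageD by metis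
qed

lemma sep:
  fixes G :: "('a,'b) monoid_scheme"
  assumes G: "group G" and H: "subgroup H G" and closed: "profinite_closed G H"
    and x: "x \<in> carrier G" "x \<notin> H"
  shows "\<exists>K'. finite_index_subgroup G K' \<and> H \<subseteq> K' \<and> x \<notin> K'"
proof -
  interpret G: group G by (rule G)
  interpret H: subgroup H G by (rule H)
  have "profinite_open G (carrier G - H)" using closed by (simp add: profinite_closed_def)
  then obtain K where K: "finite_index_subgroup G K" and xK: "x <#\<^bsub>G\<^esub> K \<subseteq> carrier G - H"
    using x unfolding profinite_open_def by blast
  have sK: "subgroup K G" and fK: "finite (rcosets\<^bsub>G\<^esub> K)" using K by (auto simp: finite_index_subgroup_def)
  interpret K: subgroup K G by (rule sK)
  obtain F :: "nat monoid" and \<psi> where F: "group F" "finite (carrier F)" "\<psi> \<in> epi G F"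
    and ker: "\<forall>x\<in>carrier G. \<forall>y\<in>carrier G. \<psi> x = \<psi> y \<longrightarrow> x \<otimes>\<^bsub>G\<^esub> inv\<^bsub>G\<^esub> y \<in> K"
    using action_epi[OF G sK fK] by blast
  interpret F: group F by (rule F(1))
  have hom: "\<psi> \<in> hom G F" using F(3) by (simp add: epi_def)
  have gh: "group_hom G F \<psi>" unfolding group_hom_def group_hom_axioms_def using G F(1) hom by simp
  interpret gh: group_hom G F \<psi> by (rule gh)
  define K' where "K' = {g \<in> carrier G. \<psi> g \<in> \<psi> ` H}"
  have sK': "subgroup K' G"
  proof (rule G.subgroupI)
    show "K' \<subseteq> carrier G" by (auto simp: K'_def)
    show "K' \<noteq> {}" using H.one_closed unfolding K'_def by blast
  next
    fix a assume "a \<in> K'"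
    then obtain h where h: "a \<in> carrier G" "h \<in> H" "\<psi> a = \<psi> h" by (auto simp: K'_def)
    have hc: "h \<in> carrier G" using h(2) H.subset by blast
    have e1: "\<psi> (inv\<^bsub>G\<^esub> a) = \<psi> (inv\<^bsub>G\<^esub> h)" using h hc by simp
    have e2: "\<psi> (inv\<^bsub>G\<^esub> h) \<in> \<psi> ` H" using H.m_inv_closed[OF h(2)] by blast
    have "inv\<^bsub>G\<^esub> a \<in> carrier G \<and> \<psi> (inv\<^bsub>G\<^esub> a) \<in> \<psi> ` H" using e1 e2 G.inv_closed[OF h(1)] by metis
    then show "inv\<^bsub>G\<^esub> a \<in> K'" unfolding K'_def by blast
  next
    fix a b assume "a \<in> K'" "b \<in> K'"
    then obtain h k where h: "a \<in> carrier G" "h \<in> H" "\<psi> a = \<psi> h" "b \<in> carrier G" "k \<in> H" "\<psi> b = \<psi> k"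
      by (auto simp: K'_def)
    have hc: "h \<in> carrier G" "k \<in> carrier G" using h(2,5) H.subset by blast+
    have e1: "\<psi> (a \<otimes>\<^bsub>G\<^esub> b) = \<psi> (h \<otimes>\<^bsub>G\<^esub> k)" using h hc by simp
    have e2: "\<psi> (h \<otimes>\<^bsub>G\<^esub> k) \<in> \<psi> ` H" using H.m_closed[OF h(2) h(5)] by blast
    have "a \<otimes>\<^bsub>G\<^esub> b \<in> carrier G \<and> \<psi> (a \<otimes>\<^bsub>G\<^esub> b) \<in> \<psi> ` H" using e1 e2 G.m_closed[OF h(1) h(4)] by metis
    then show "a \<otimes>\<^bsub>G\<^esub> b \<in> K'" unfolding K'_def by blast
  qed
  have ker': "\<forall>a\<in>carrier G. \<forall>b\<in>carrier G. \<psi> a = \<psi> b \<longrightarrow> a \<otimes>\<^bsub>G\<^esub> inv\<^bsub>G\<^esub> b \<in> K'"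
  proof (intro ballI impI)
    fix a b assume ab: "a \<in> carrier G" "b \<in> carrier G" "\<psi> a = \<psi> b"
    then have e1: "\<psi> (a \<otimes>\<^bsub>G\<^esub> inv\<^bsub>G\<^esub> b) = \<psi> \<one>\<^bsub>G\<^esub>" by simp
    have e2: "\<psi> \<one>\<^bsub>G\<^esub> \<in> \<psi> ` H" using H.one_closed by blast
    have "a \<otimes>\<^bsub>G\<^esub> inv\<^bsub>G\<^esub> b \<in> carrier G \<and> \<psi> (a \<otimes>\<^bsub>G\<^esub> inv\<^bsub>G\<^esub> b) \<in> \<psi> ` H"
      using e1 e2 ab by (metis G.m_closed G.inv_closed)
    then show "a \<otimes>\<^bsub>G\<^esub> inv\<^bsub>G\<^esub> b \<in> K'" unfolding K'_def by blast
  qed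
  have fK': "finite (rcosets\<^bsub>G\<^esub> K')" using rcosets_card_eq(2)[OF G F sK' ker'] .
  have "H \<subseteq> K'" using H.subset by (auto simp: K'_def)
  moreover have "x \<notin> K'"
  proof
    assume "x \<in> K'"
    then obtain h where h: "h \<in> H" "\<psi> x = \<psi> h" by (auto simp: K'_def)
    have hc: "h \<in> carrier G" using h(1) H.subset by blast
    have e: "\<psi> (inv\<^bsub>G\<^esub> h \<otimes>\<^bsub>G\<^esub> x) = \<psi> \<one>\<^bsub>G\<^esub>" using h hc x by simp
    have "(inv\<^bsub>G\<^esub> h \<otimes>\<^bsub>G\<^esub> x) \<otimes>\<^bsub>G\<^esub> inv\<^bsub>G\<^esub> \<one>\<^bsub>G\<^esub> \<in> K"
      by (rule ker[rule_format, OF G.m_closed[OF G.inv_closed[OF hc] x(1)] G.one_closed e])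
    then have k: "inv\<^bsub>G\<^esub> h \<otimes>\<^bsub>G\<^esub> x \<in> K" using hc x by simp
    then have "inv\<^bsub>G\<^esub> (inv\<^bsub>G\<^esub> h \<otimes>\<^bsub>G\<^esub> x) \<in> K" by (rule K.m_inv_closed)
    moreover have "x \<otimes>\<^bsub>G\<^esub> inv\<^bsub>G\<^esub> (inv\<^bsub>G\<^esub> h \<otimes>\<^bsub>G\<^esub> x) = h"
      using hc x by (simp add: G.inv_mult_group G.m_assoc[symmetric])
    ultimately have "h \<in> x <#\<^bsub>G\<^esub> K" unfolding l_coset_def by force
    then show False using xK h(1) by blast
  qed
  ultimately show ?thesis using sK' fK' by (auto simp: finite_index_subgroup_def)
qed

lemma strict:
  fixes G :: "('a,'b) monoid_scheme"
  assumes G: "group G" and A: "subgroup A G" "finite (rcosets\<^bsub>G\<^esub> A)" and B: "subgroup B G"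
    and AB: "A \<subseteq> B" and x: "x \<in> B" "x \<notin> A"
  shows "finite (rcosets\<^bsub>G\<^esub> B) \<and> card (rcosets\<^bsub>G\<^esub> B) < card (rcosets\<^bsub>G\<^esub> A)"
proof -
  interpret G: group G by (rule G)
  interpret A: subgroup A G by (rule A(1))
  interpret B: subgroup B G by (rule B)
  obtain F :: "nat monoid" and \<psi> where F: "group F" "finite (carrier F)" "\<psi> \<in> epi G F"
    and kerA: "\<forall>x\<in>carrier G. \<forall>y\<in>carrier G. \<psi> x = \<psi> y \<longrightarrow> x \<otimes>\<^bsub>G\<^esub> inv\<^bsub>G\<^esub> y \<in> A"
    using action_epi[OF G A] by blast
  interpret F: group F by (rule F(1))
  have kerB: "\<forall>x\<in>carrier G. \<forall>y\<in>carrier G. \<psi> x = \<psi> y \<longrightarrow> x \<otimes>\<^bsub>G\<^esub> inv\<^bsub>G\<^esub> y \<in> B"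
    using kerA AB by blast
  have cA: "card (rcosets\<^bsub>F\<^esub> (\<psi> ` A)) = card (rcosets\<^bsub>G\<^esub> A)" using rcosets_card_eq(1)[OF G F A(1) kerA] .
  have cB: "card (rcosets\<^bsub>F\<^esub> (\<psi> ` B)) = card (rcosets\<^bsub>G\<^esub> B)" using rcosets_card_eq(1)[OF G F B kerB] .
  have fB: "finite (rcosets\<^bsub>G\<^esub> B)" using rcosets_card_eq(2)[OF G F B kerB] .
  have sA: "subgroup (\<psi> ` A) F" using epi_ratio(2)[OF G F A(1)] .
  have sB: "subgroup (\<psi> ` B) F" using epi_ratio(2)[OF G F B] .
  have lA: "card (rcosets\<^bsub>F\<^esub> (\<psi> ` A)) * card (\<psi> ` A) = card (carrier F)"
    using F.lagrange[OF sA] by (simp add: order_def)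
  have lB: "card (rcosets\<^bsub>F\<^esub> (\<psi> ` B)) * card (\<psi> ` B) = card (carrier F)"
    using F.lagrange[OF sB] by (simp add: order_def)
  have xc: "x \<in> carrier G" using x(1) B.subset by blast
  have "\<psi> x \<notin> \<psi> ` A"
  proof
    assume "\<psi> x \<in> \<psi> ` A"
    then obtain a where a: "a \<in> A" "\<psi> x = \<psi> a" by blast
    have ac: "a \<in> carrier G" using a(1) A.subset by blast
    have "x \<otimes>\<^bsub>G\<^esub> inv\<^bsub>G\<^esub> a \<in> A" using kerA a ac xc by blast
    then have "(x \<otimes>\<^bsub>G\<^esub> inv\<^bsub>G\<^esub> a) \<otimes>\<^bsub>G\<^esub> a \<in> A" using a(1) by (rule A.m_closed)
    then show False using x(2) ac xc by (simp add: G.m_assoc)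
  qed
  then have "\<psi> ` A \<subset> \<psi> ` B" using AB x(1) by blast
  moreover have "finite (\<psi> ` B)" using sB F(2) by (meson finite_subset subgroup.subset)
  ultimately have lt: "card (\<psi> ` A) < card (\<psi> ` B)" by (rule psubset_card_mono[rotated])
  have "carrier F \<noteq> {}" using F.one_closed by blast
  then have pos: "card (carrier F) > 0" using F(2) by (simp add: card_gt_0_iff)
  have "card (rcosets\<^bsub>G\<^esub> B) < card (rcosets\<^bsub>G\<^esub> A)"
  proof (rule ccontr)
    assume "\<not> ?thesis"
    then have le: "card (rcosets\<^bsub>G\<^esub> A) \<le> card (rcosets\<^bsub>G\<^esub> B)" by simp
    have p: "card (rcosets\<^bsub>G\<^esub> B) > 0" using lB cB pos by (auto intro!: Nat.gr0I)
    have "card (rcosets\<^bsub>G\<^esub> A) * card (\<psi> ` A) \<le> card (rcosets\<^bsub>G\<^esub> B) * card (\<psi> ` A)"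
      using le by simp
    also have "\<dots> < card (rcosets\<^bsub>G\<^esub> B) * card (\<psi> ` B)" using p lt by simp
    finally show False using lA lB cA cB by simp
  qed
  then show ?thesis using fB by simp
qed

lemma large_index:
  fixes G :: "('a,'b) monoid_scheme"
  assumes G: "group G" and H: "subgroup H G" and closed: "profinite_closed G H"
    and inf: "\<not> finite (rcosets\<^bsub>G\<^esub> H)"
  shows "\<exists>L. finite_index_subgroup G L \<and> H \<subseteq> L \<and> n \<le> card (rcosets\<^bsub>G\<^esub> L)"
proof (induction n)
  case 0
  interpret G: group G by (rule G)
  have "rcosets\<^bsub>G\<^esub> (carrier G) \<subseteq> {carrier G}"
    using subgroup.rcos_const[OF G.subgroup_self G] by (auto simp: RCOSETS_def)
  then have "finite (rcosets\<^bsub>G\<^esub> (carrier G))" by (rule finite_subset) simp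
  then have "finite_index_subgroup G (carrier G)" using G.subgroup_self by (simp add: finite_index_subgroup_def)
  then show ?case using subgroup.subset[OF H] by blast
next
  case (Suc n)
  interpret G: group G by (rule G)
  obtain L where L: "finite_index_subgroup G L" "H \<subseteq> L" "n \<le> card (rcosets\<^bsub>G\<^esub> L)" using Suc by blast
  have sL: "subgroup L G" and fL: "finite (rcosets\<^bsub>G\<^esub> L)" using L(1) by (auto simp: finite_index_subgroup_def)
  have "L \<noteq> H" using fL inf by blast
  then obtain x where x: "x \<in> L" "x \<notin> H" using L(2) by blast
  have xc: "x \<in> carrier G" using x(1) subgroup.subset[OF sL] by blast
  obtain K where K: "finite_index_subgroup G K" "H \<subseteq> K" "x \<notin> K" using sep[OF G H closed xc x(2)] by blast
  have LK: "finite_index_subgroup G (L \<inter> K)" using fi_Int[OF G L(1) K(1)] .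
  have "card (rcosets\<^bsub>G\<^esub> L) < card (rcosets\<^bsub>G\<^esub> (L \<inter> K))"
    using strict[OF G _ _ sL _ x(1)] LK K(3) by (auto simp: finite_index_subgroup_def)
  then show ?case using LK L(2) K(2) L(3) by (intro exI[of _ "L \<inter> K"]) auto
qed

theorem proposition2p1:
  fixes G :: "('a, 'b) monoid_scheme" and H :: "'a set"
  assumes "group G" and "subgroup H G" and "profinite_closed G H"
  shows "profinite_measure G H =
           (if finite (rcosets\<^bsub>G\<^esub> H) then 1 / real (card (rcosets\<^bsub>G\<^esub> H)) else 0)"
proof -
  note G = assms(1) and H = assms(2) and closed = assms(3)
  interpret G: group G by (rule G)
  interpret Hs: subgroup H G by (rule H)
  define S where "S = {real (card (\<phi> ` H)) / real (card (\<phi> ` carrier G)) | \<phi> (F :: nat monoid).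
      group F \<and> finite (carrier F) \<and> \<phi> \<in> epi G F}"
  have PM: "profinite_measure G H = Inf S" by (simp add: profinite_measure_def S_def)
  have Sform: "\<exists>F::nat monoid. \<exists>\<phi>. group F \<and> finite (carrier F) \<and> \<phi> \<in> epi G F \<and>
      r = 1 / real (card (rcosets\<^bsub>F\<^esub> (\<phi> ` H)))" if "r \<in> S" for r
    using that epi_ratio(1)[OF G _ _ _ H] unfolding S_def by blast
  have Sge0: "r \<ge> 0" if "r \<in> S" for r using Sform[OF that] by auto
  have HH: "H \<in> rcosets\<^bsub>G\<^esub> H" using G.rcosetsI[OF Hs.subset G.one_closed] Hs.subset by simp
  show ?thesis
  proof (cases "finite (rcosets\<^bsub>G\<^esub> H)")
    case True
    obtain F :: "nat monoid" and \<psi> where F: "group F" "finite (carrier F)" "\<psi> \<in> epi G F"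
      and ker: "\<forall>x\<in>carrier G. \<forall>y\<in>carrier G. \<psi> x = \<psi> y \<longrightarrow> x \<otimes>\<^bsub>G\<^esub> inv\<^bsub>G\<^esub> y \<in> H"
      using action_epi[OF G H True] by blast
    have "real (card (\<psi> ` H)) / real (card (\<psi> ` carrier G)) = 1 / real (card (rcosets\<^bsub>G\<^esub> H))"
      using epi_ratio(1)[OF G F H] rcosets_card_eq(1)[OF G F H ker] by simp
    then have mem: "1 / real (card (rcosets\<^bsub>G\<^esub> H)) \<in> S"
      unfolding S_def using F by force
    have lb: "1 / real (card (rcosets\<^bsub>G\<^esub> H)) \<le> r" if rS: "r \<in> S" for r
    proof -
      obtain F' :: "nat monoid" and \<phi> where F': "group F'" "finite (carrier F')" "\<phi> \<in> epi G F'"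
        and r: "r = 1 / real (card (rcosets\<^bsub>F'\<^esub> (\<phi> ` H)))" using Sform[OF rS] by blast
      interpret F': group F' by (rule F'(1))
      have eq: "rcosets\<^bsub>F'\<^esub> (\<phi> ` H) = (\<lambda>C. \<phi> ` C) ` (rcosets\<^bsub>G\<^esub> H)" by (rule epi_rcosets[OF G F'(1) F'(3) H])
      have le: "card (rcosets\<^bsub>F'\<^esub> (\<phi> ` H)) \<le> card (rcosets\<^bsub>G\<^esub> H)" unfolding eq using True by (rule card_image_le)
      have fin': "finite (rcosets\<^bsub>F'\<^esub> (\<phi> ` H))" unfolding eq using True by simp
      have "rcosets\<^bsub>F'\<^esub> (\<phi> ` H) \<noteq> {}" unfolding eq using HH by blast
      then have "card (rcosets\<^bsub>F'\<^esub> (\<phi> ` H)) > 0" using fin' by (simp add: card_gt_0_iff)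
      then show ?thesis using le unfolding r by (simp add: frac_le)
    qed
    have "Inf S = 1 / real (card (rcosets\<^bsub>G\<^esub> H))" by (rule cInf_eq_minimum[OF mem lb])
    then show ?thesis using True PM by simp
  next
    case False
    have small: "\<exists>r\<in>S. r \<le> 1 / real (Suc n)" for n
    proof -
      obtain L where L: "finite_index_subgroup G L" "H \<subseteq> L" "Suc n \<le> card (rcosets\<^bsub>G\<^esub> L)"
        using large_index[OF G H closed False] by blast
      have sL: "subgroup L G" and fL: "finite (rcosets\<^bsub>G\<^esub> L)" using L(1) by (auto simp: finite_index_subgroup_def)
      obtain F :: "nat monoid" and \<psi> where F: "group F" "finite (carrier F)" "\<psi> \<in> epi G F"
        and ker: "\<forall>x\<in>carrier G. \<forall>y\<in>carrier G. \<psi> x = \<psi> y \<longrightarrow> x \<otimes>\<^bsub>G\<^esub> inv\<^bsub>G\<^esub> y \<in> L"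
        using action_epi[OF G sL fL] by blast
      define r where "r = real (card (\<psi> ` H)) / real (card (\<psi> ` carrier G))"
      have rS: "r \<in> S" unfolding r_def S_def using F by blast
      have "finite (\<psi> ` L)" using F(2) epi_ratio(2)[OF G F sL] by (meson finite_subset subgroup.subset)
      then have "card (\<psi> ` H) \<le> card (\<psi> ` L)" using L(2) by (intro card_mono) auto
      then have "r \<le> real (card (\<psi> ` L)) / real (card (\<psi> ` carrier G))"
        unfolding r_def by (simp add: divide_right_mono)
      also have "\<dots> = 1 / real (card (rcosets\<^bsub>G\<^esub> L))"
        using epi_ratio(1)[OF G F sL] rcosets_card_eq(1)[OF G F sL ker] by simp
      also have "\<dots> \<le> 1 / real (Suc n)" using L(3) by (simp add: frac_le)
      finally show ?thesis using rS by blast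
    qed
    have ne: "S \<noteq> {}" using small[of 0] by blast
    have bdd: "bdd_below S" using Sge0 by (auto simp: bdd_below_def)
    have ge: "Inf S \<ge> 0" using ne Sge0 by (intro cInf_greatest) auto
    have le: "Inf S \<le> 1 / real (Suc n)" for n
      using small[of n] cInf_lower[OF _ bdd] by (meson order_trans)
    have "Inf S \<le> 0"
    proof (rule ccontr)
      assume "\<not> Inf S \<le> 0"
      then have pos: "0 < Inf S" by simp
      from reals_Archimedean[OF pos] obtain n where "inverse (real (Suc n)) < Inf S" ..
      then show False using le[of n] by (simp add: inverse_eq_divide)
    qed
    then show ?thesis using ge False PM by simp
  qed
qed

end
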